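(* Let $\mathbf{X},\mathbf{Y}$ be computable metric spaces with $\mathbf{Y}$ compact, and $\mathfrak{A}\subseteq\mathcal{A}(\mathbf{X})$, $\mathfrak{B}\subseteq\mathcal{A}(\mathbf{Y})$. Let computable $H,K$ witness $\mathrm{C}_{\mathbf{X}|\mathfrak{A}}\leq_W\mathrm{C}_{\mathbf{Y}|\mathfrak{B}}$, in the sense that for every $\psi$-name $p$ of a set $A$ in the domain of $\mathrm{C}_{\mathbf{X}|\mathfrak{A}}$, $K(p)$ is a $\psi$-name of a set in the domain of $\mathrm{C}_{\mathbf{Y}|\mathfrak{B}}$, and for every name $q$ of a point of $\psi(K(p))$, $H(\langle p,q\rangle)$ is a name of a point of $A$. Then for every $p\in\operatorname{dom}(\mathrm{C}_{\mathbf{X}|\mathfrak{A}}\psi)$ and every $\varepsilon>0$ there are $n\in\mathbb{N}$ and $\delta>0$ such that for all $q\in X_\varepsilon(\mathfrak{A})\cap B(p,2^{-n})$ we have $\lambda(\psi(K(q)))>\delta$.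
   Context: For a computable metric space $\mathbf{X}$, $\mathcal{A}(\mathbf{X})$ is the space of closed subsets with representation $\psi(p):=X\setminus\bigcup_{i}B_{p(i)}$, where $(B_j)$ is a standard enumeration of open balls with centers in the dense subset and rational radii. $\mathrm{C}_{\mathbf{X}|\mathfrak{A}}$ is closed choice restricted to the non-empty members of $\mathfrak{A}$ (input a closed set, output any point of it); $\operatorname{dom}(\mathrm{C}_{\mathbf{X}|\mathfrak{A}}\psi)$ is the set of $\psi$-names of such sets. Points are named via the Cauchy representation. $B(p,2^{-n})$ is the ball in Baire space $\mathbb{N}^\mathbb{N}$ (standard metric), $B(x,\varepsilon)$ the open ball in $\mathbf{X}$, and $\lambda(A)$ the outer diameter $\sup\{d(x,y)\mid x,y\in A\}$. For $\varepsilon>0$, $X_\varepsilon(\mathfrak{A}) := \overline{\psi^{-1}(\{A\in\mathfrak{A}\mid \forall x\in\mathbf{X}\ \exists B\in\mathfrak{A}\ B\subseteq A\setminus B(x,\varepsilon)\})}\subseteq\mathbb{N}^\mathbb{N}$, where $A$ and $B$ range over non-empty members of $\mathfrak{A}$ and the closure is taken in Baire space. *)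

theory Defs
  imports "HOL-Analysis.Analysis"
begin

text \<open>Baire space is modelled as the type nat => nat; its topology is the
product topology of discrete nat (Function_Topology), i.e. the Baire topology.\<close>

definition pos_rat_enum :: "nat \<Rightarrow> real" where
  "pos_rat_enum k = real (Suc (fst (prod_decode k))) / real (Suc (snd (prod_decode k)))"

definition rat_ball :: "(nat \<Rightarrow> 'a::metric_space) \<Rightarrow> nat \<Rightarrow> 'a set" where
  "rat_ball \<alpha> j = ball (\<alpha> (fst (prod_decode j))) (pos_rat_enum (snd (prod_decode j)))"

definition psi :: "(nat \<Rightarrow> 'a::metric_space) \<Rightarrow> (nat \<Rightarrow> nat) \<Rightarrow> 'a set" where
  "psi \<alpha> p = UNIV - (\<Union>i. rat_ball \<alpha> (p i))"

definition cauchy_names :: "(nat \<Rightarrow> 'a::metric_space) \<Rightarrow> 'a \<Rightarrow> (nat \<Rightarrow> nat) set" where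
  "cauchy_names \<alpha> x = {p. \<forall>i. dist (\<alpha> (p i)) x \<le> (1/2) ^ i}"

text \<open>Computable metric space data (topological part): a dense sequence.\<close>
definition dense_seq :: "(nat \<Rightarrow> 'a::metric_space) \<Rightarrow> bool" where
  "dense_seq \<alpha> \<longleftrightarrow> closure (range \<alpha>) = UNIV"

definition dom_choice :: "(nat \<Rightarrow> 'a::metric_space) \<Rightarrow> 'a set set \<Rightarrow> (nat \<Rightarrow> nat) set" where
  "dom_choice \<alpha> \<AA> = {p. psi \<alpha> p \<in> \<AA> \<and> psi \<alpha> p \<noteq> {}}"

definition baire_dist :: "(nat \<Rightarrow> nat) \<Rightarrow> (nat \<Rightarrow> nat) \<Rightarrow> real" where
  "baire_dist p q = (if p = q then 0 else (1/2) ^ (LEAST i. p i \<noteq> q i))"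

definition baire_ball :: "(nat \<Rightarrow> nat) \<Rightarrow> nat \<Rightarrow> (nat \<Rightarrow> nat) set" where
  "baire_ball p n = {q. baire_dist p q < (1/2) ^ n}"

definition X_eps :: "(nat \<Rightarrow> 'a::metric_space) \<Rightarrow> 'a set set \<Rightarrow> real \<Rightarrow> (nat \<Rightarrow> nat) set" where
  "X_eps \<alpha> \<AA> \<epsilon> = closure {p. psi \<alpha> p \<in> \<AA> \<and> psi \<alpha> p \<noteq> {} \<and>
      (\<forall>x. \<exists>B\<in>\<AA>. B \<noteq> {} \<and> B \<subseteq> psi \<alpha> p - ball x \<epsilon>)}"

end

theory Submission
  imports Defs
begin
definition agree :: "(nat \<Rightarrow> nat) \<Rightarrow> (nat \<Rightarrow> nat) \<Rightarrow> nat \<Rightarrow> bool" where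
  "agree p q N \<longleftrightarrow> (\<forall>j<N. p j = q j)"

lemma open_cyl: "open {r::nat\<Rightarrow>nat. agree r c M}"
proof -
  have "{r::nat\<Rightarrow>nat. agree r c M} = (\<Inter>j\<in>{..<M}. (\<lambda>r. r j) -` {c j})"
    by (auto simp: agree_def)
  moreover have "open ((\<lambda>r::nat\<Rightarrow>nat. r j) -` {c j})" for j
    using continuous_on_product_coordinates[of j] open_discrete[of "{c j}"]
  proof -
    have "open ((\<lambda>r::nat\<Rightarrow>nat. r j) -` {c j} \<inter> UNIV)"
      using continuous_on_product_coordinates[of j] open_discrete[of "{c j}"]
        continuous_on_open_vimage[OF open_UNIV] by blast
    thus ?thesis by simp
  qed
  ultimately show ?thesis by auto
qed
lemma cyl_basis:
  assumes "open (A::(nat\<Rightarrow>nat) set)" "p \<in> A"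
  shows "\<exists>N. {q. agree q p N} \<subseteq> A"
proof -
  have "openin (product_topology (\<lambda>i. euclidean) UNIV) A" using assms open_fun_def by auto
  from product_topology_open_contains_basis[OF this assms(2)]
  obtain X where H: "p \<in> (\<Pi>\<^sub>E i\<in>UNIV. X i)" "finite {i. X i \<noteq> UNIV}" "(\<Pi>\<^sub>E i\<in>UNIV. X i) \<subseteq> A"
    by auto
  obtain N where N: "{i. X i \<noteq> UNIV} \<subseteq> {..<N}"
    using H(2) finite_nat_bounded by blast
  have "{q. agree q p N} \<subseteq> (\<Pi>\<^sub>E i\<in>UNIV. X i)"
  proof
    fix q assume "q \<in> {q. agree q p N}"
    hence a: "\<And>j. j < N \<Longrightarrow> q j = p j" by (auto simp: agree_def)
    have "q i \<in> X i" for i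
    proof (cases "i < N")
      case True thus ?thesis using a H(1) by auto
    next
      case False thus ?thesis using N by auto
    qed
    thus "q \<in> (\<Pi>\<^sub>E i\<in>UNIV. X i)" by auto
  qed
  thus ?thesis using H(3) by blast
qed

lemma cont_agree:
  assumes "continuous_on D (f::(nat\<Rightarrow>nat)\<Rightarrow>(nat\<Rightarrow>nat))" "p \<in> D"
  shows "\<exists>N. \<forall>q\<in>D. agree q p N \<longrightarrow> agree (f q) (f p) M"
proof -
  obtain A where A: "open A" "A \<inter> D = f -` {r. agree r (f p) M} \<inter> D"
    using assms(1) open_cyl[of "f p" M] unfolding continuous_on_open_invariant by metis
  have "p \<in> A" using A(2) assms(2) by (auto simp: agree_def)
  then obtain N where N: "{q. agree q p N} \<subseteq> A" using cyl_basis A(1) by metis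
  have "q \<in> D \<Longrightarrow> agree q p N \<Longrightarrow> agree (f q) (f p) M" for q
    using N A(2) by blast
  thus ?thesis by blast
qed

lemma cont_agree2:
  assumes "continuous_on D (f::((nat\<Rightarrow>nat)\<times>(nat\<Rightarrow>nat))\<Rightarrow>(nat\<Rightarrow>nat))" "(p,r) \<in> D"
  shows "\<exists>N. \<forall>s t. (s,t)\<in>D \<longrightarrow> agree s p N \<longrightarrow> agree t r N \<longrightarrow> agree (f (s,t)) (f (p,r)) M"
proof -
  obtain A where A: "open A" "A \<inter> D = f -` {r'. agree r' (f (p,r)) M} \<inter> D"
    using assms(1) open_cyl[of "f (p,r)" M] unfolding continuous_on_open_invariant by metis
  have "(p,r) \<in> A" using A(2) assms(2) by (auto simp: agree_def)
  then obtain U V where UV: "open U" "open V" "p \<in> U" "r \<in> V" "U \<times> V \<subseteq> A"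
    using open_prod_elim[OF A(1)] by (metis mem_Sigma_iff)
  obtain N1 where N1: "{q. agree q p N1} \<subseteq> U" using cyl_basis UV by metis
  obtain N2 where N2: "{q. agree q r N2} \<subseteq> V" using cyl_basis UV by metis
  have "agree s p (max N1 N2) \<Longrightarrow> agree t r (max N1 N2) \<Longrightarrow> (s,t) \<in> A" for s t
  proof -
    assume "agree s p (max N1 N2)" "agree t r (max N1 N2)"
    hence "agree s p N1" "agree t r N2" by (auto simp: agree_def)
    hence "s \<in> U" "t \<in> V" using N1 N2 by auto
    thus "(s,t) \<in> A" using UV(5) by auto
  qed
  hence "(s,t)\<in>D \<Longrightarrow> agree s p (max N1 N2) \<Longrightarrow> agree t r (max N1 N2) \<Longrightarrow> agree (f (s,t)) (f (p,r)) M" for s t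
    using A(2) by blast
  thus ?thesis by blast
qed


lemma baire_ball_agree:
  assumes "q \<in> baire_ball p n" shows "agree q p (Suc n)"
proof (cases "p = q")
  case True thus ?thesis by (simp add: agree_def)
next
  case False
  define L where "L = (LEAST i. p i \<noteq> q i)"
  have "(1/2::real) ^ L < (1/2) ^ n" using assms False by (simp add: baire_ball_def baire_dist_def L_def)
  hence "n < L" by (simp add: power_strict_decreasing_iff)
  hence "j < Suc n \<Longrightarrow> p j = q j" for j using not_less_Least[of j "\<lambda>i. p i \<noteq> q i"] L_def by auto
  thus ?thesis by (auto simp: agree_def)
qed

lemma closure_agree:
  assumes "q \<in> closure S" shows "\<exists>s\<in>S. agree s q N"
proof -
  have "q \<in> {r. agree r q N}" by (simp add: agree_def)
  hence "S \<inter> {r. agree r q N} \<noteq> {}"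
    using assms open_cyl[of q N] unfolding closure_iff_nhds_not_empty by blast
  thus ?thesis by blast
qed

lemma agree_mono: "agree p q N \<Longrightarrow> M \<le> N \<Longrightarrow> agree p q M"
  by (auto simp: agree_def)

lemma agree_trans: "agree p q N \<Longrightarrow> agree q r N \<Longrightarrow> agree p r N"
  by (auto simp: agree_def)

lemma agree_sym: "agree p q N \<Longrightarrow> agree q p N"
  by (auto simp: agree_def)

lemma psi_agree:
  assumes "agree r r' M" shows "psi \<beta> r \<subseteq> UNIV - (\<Union>i\<in>{..<M}. rat_ball \<beta> (r' i))"
proof
  fix x assume x: "x \<in> psi \<beta> r"
  have "x \<notin> rat_ball \<beta> (r' i)" if "i < M" for i
  proof -
    have "r i = r' i" using assms that by (simp add: agree_def)
    moreover have "x \<notin> rat_ball \<beta> (r i)" using x by (simp add: psi_def)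
    ultimately show ?thesis by simp
  qed
  thus "x \<in> UNIV - (\<Union>i\<in>{..<M}. rat_ball \<beta> (r' i))" by auto
qed

lemma open_rat_ball: "open (rat_ball \<beta> j)"
  unfolding rat_ball_def by (rule open_ball)

lemma shrink:
  fixes \<beta> :: "nat \<Rightarrow> 'b::metric_space" and K :: "(nat \<Rightarrow> nat) \<Rightarrow> (nat \<Rightarrow> nat)"
  assumes cpt: "compact (UNIV :: 'b set)" and cont: "continuous_on D K" and qD: "q \<in> D"
    and U: "open U" "psi \<beta> (K q) \<subseteq> U"
  shows "\<exists>N. \<forall>s\<in>D. agree s q N \<longrightarrow> psi \<beta> (K s) \<subseteq> U"
proof -
  have "compact (- U)" using compact_Int_closed[OF cpt closed_Compl[OF U(1)]] by simp
  hence c: "compact (UNIV - U)" by (simp add: Compl_eq_Diff_UNIV)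
  have cov: "UNIV - U \<subseteq> (\<Union>i\<in>UNIV. rat_ball \<beta> (K q i))" using U(2) by (auto simp: psi_def)
  have op: "\<And>i. i \<in> UNIV \<Longrightarrow> open (rat_ball \<beta> (K q i))" by (rule open_rat_ball)
  obtain F where F: "F \<subseteq> UNIV" "finite F" "UNIV - U \<subseteq> (\<Union>i\<in>F. rat_ball \<beta> (K q i))"
    by (rule compactE_image[OF c op cov])
  obtain M where M: "F \<subseteq> {..<M}" using F(2) finite_nat_bounded by blast
  obtain N where N: "\<forall>s\<in>D. agree s q N \<longrightarrow> agree (K s) (K q) M" using cont_agree[OF cont qD] by blast
  have "psi \<beta> (K s) \<subseteq> U" if "s \<in> D" "agree s q N" for s
  proof -
    have "agree (K s) (K q) M" using N that by blast
    hence "psi \<beta> (K s) \<subseteq> UNIV - (\<Union>i\<in>{..<M}. rat_ball \<beta> (K q i))"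
      by (rule psi_agree)
    also have "\<dots> \<subseteq> UNIV - (\<Union>i\<in>F. rat_ball \<beta> (K q i))" using M by auto
    also have "\<dots> \<subseteq> U" using F(3) by auto
    finally show ?thesis .
  qed
  thus ?thesis by blast
qed

lemma dense_approx:
  assumes "dense_seq \<alpha>" "e > 0" shows "\<exists>i. dist (\<alpha> i) y < e"
proof -
  have "y \<in> closure (range \<alpha>)" using assms(1) by (simp add: dense_seq_def)
  thus ?thesis using assms(2) unfolding closure_approachable by blast
qed

lemma pos_rat_pos: "pos_rat_enum k > 0"
  by (simp add: pos_rat_enum_def)

lemma pos_rat_small: assumes "e > 0" shows "\<exists>k. pos_rat_enum k < e"
proof -
  obtain b::nat where b: "1 / real (Suc b) < e"
    using assms by (metis nat_approx_posE)
  have "pos_rat_enum (prod_encode (0, b)) = 1 / real (Suc b)" by (simp add: pos_rat_enum_def)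
  thus ?thesis using b by metis
qed

lemma name_exists:
  fixes \<alpha> :: "nat \<Rightarrow> 'a::metric_space"
  assumes d: "dense_seq \<alpha>" and B: "closed B" "B \<noteq> UNIV"
  shows "\<exists>t. psi \<alpha> t = B"
proof -
  define J where "J = {j. rat_ball \<alpha> j \<inter> B = {}}"
  have cov: "\<exists>j\<in>J. y \<in> rat_ball \<alpha> j" if "y \<notin> B" for y
  proof -
    have "open (- B)" using B(1) by (simp add: closed_def)
    moreover have "y \<in> - B" using that by simp
    ultimately obtain e where e0: "e > 0" "ball y e \<subseteq> - B"
      unfolding open_contains_ball by blast
    have e: "ball y e \<inter> B = {}" using e0(2) by blast
    obtain k where k: "pos_rat_enum k < e/2" using pos_rat_small[of "e/2"] e0(1) by auto
    obtain i where i: "dist (\<alpha> i) y < pos_rat_enum k" using dense_approx[OF d pos_rat_pos] by blast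
    define j where "j = prod_encode (i, k)"
    have rb: "rat_ball \<alpha> j = ball (\<alpha> i) (pos_rat_enum k)" by (simp add: rat_ball_def j_def)
    have "rat_ball \<alpha> j \<subseteq> ball y e"
    proof
      fix z assume "z \<in> rat_ball \<alpha> j"
      hence z: "dist (\<alpha> i) z < pos_rat_enum k" using rb by simp
      have "dist y z \<le> dist (\<alpha> i) y + dist (\<alpha> i) z" by (rule dist_triangle3)
      hence "dist y z < e" using i k z by linarith
      thus "z \<in> ball y e" by simp
    qed
    hence "rat_ball \<alpha> j \<inter> B = {}" using e by blast
    hence "j \<in> J" unfolding J_def by simp
    moreover have "y \<in> rat_ball \<alpha> j" using rb i by (simp add: dist_commute)
    ultimately show ?thesis by blast
  qed
  obtain y0 where "y0 \<notin> B" using B(2) by blast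
  hence "J \<noteq> {}" using cov by blast
  hence rng: "range (from_nat_into J) = J" by simp
  have "psi \<alpha> (from_nat_into J) = B"
  proof
    show "psi \<alpha> (from_nat_into J) \<subseteq> B"
    proof
      fix y assume y: "y \<in> psi \<alpha> (from_nat_into J)"
      show "y \<in> B"
      proof (rule ccontr)
        assume "y \<notin> B"
        then obtain j where j: "j \<in> J" "y \<in> rat_ball \<alpha> j" using cov by blast
        then obtain i where i: "j = from_nat_into J i" using rng by blast
        have "y \<notin> rat_ball \<alpha> (from_nat_into J i)" using y by (simp add: psi_def)
        thus False using j(2) i by simp
      qed
    qed
    show "B \<subseteq> psi \<alpha> (from_nat_into J)"
    proof
      fix y assume yB: "y \<in> B"
      have "y \<notin> rat_ball \<alpha> (from_nat_into J i)" for i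
      proof -
        have "from_nat_into J i \<in> J" using rng by blast
        hence "rat_ball \<alpha> (from_nat_into J i) \<inter> B = {}" unfolding J_def by simp
        thus ?thesis using yB by blast
      qed
      thus "y \<in> psi \<alpha> (from_nat_into J)" by (simp add: psi_def)
    qed
  qed
  thus ?thesis by blast
qed


lemma strict_name:
  assumes "dense_seq \<beta>" shows "\<exists>r. \<forall>i. dist (\<beta> (r i)) y < (1/2) ^ Suc i"
proof -
  have "\<forall>i. \<exists>j. dist (\<beta> j) y < (1/2) ^ Suc i"
  proof
    fix i
    have pos: "(0::real) < (1/2)^Suc i" by simp
    show "\<exists>j. dist (\<beta> j) y < (1/2) ^ Suc i" by (rule dense_approx[OF assms pos])
  qed
  thus ?thesis by (rule choice)
qed

lemma name_patch:
  assumes d: "dense_seq \<beta>" and a: "\<forall>i<N. dist (\<beta> (r i)) y \<le> (1/2) ^ i"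
  shows "\<exists>r'. agree r' r N \<and> r' \<in> cauchy_names \<beta> y"
proof -
  obtain g where g: "\<forall>i. dist (\<beta> (g i)) y < (1/2) ^ Suc i" using strict_name[OF d] by blast
  define r' where "r' = (\<lambda>i. if i < N then r i else g i)"
  have "dist (\<beta> (r' i)) y \<le> (1/2) ^ i" for i
  proof (cases "i < N")
    case True thus ?thesis using a by (simp add: r'_def)
  next
    case False
    have le: "(1/2::real) ^ Suc i \<le> (1/2) ^ i" by (simp add: power_decreasing)
    have g_i: "dist (\<beta> (g i)) y < (1/2)^Suc i" using g by blast
    have e: "r' i = g i" using False r'_def by simp
    show ?thesis unfolding e using g_i le by linarith
  qed
  hence "r' \<in> cauchy_names \<beta> y" by (simp add: cauchy_names_def)
  moreover have "agree r' r N" by (simp add: agree_def r'_def)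
  ultimately show ?thesis by blast
qed

lemma splice_psi:
  assumes "psi \<alpha> t = B" "B \<subseteq> psi \<alpha> q"
  shows "psi \<alpha> (\<lambda>j. if j < L then q j else t (j - L)) = B"
proof
  show "psi \<alpha> (\<lambda>j. if j < L then q j else t (j - L)) \<subseteq> B"
  proof
    fix x assume x: "x \<in> psi \<alpha> (\<lambda>j. if j < L then q j else t (j - L))"
    have "x \<notin> rat_ball \<alpha> (t i)" for i
    proof -
      have "x \<notin> rat_ball \<alpha> ((\<lambda>j. if j < L then q j else t (j - L)) (i + L))"
        using x unfolding psi_def by blast
      thus ?thesis by simp
    qed
    hence "x \<in> psi \<alpha> t" by (simp add: psi_def)
    thus "x \<in> B" using assms(1) by simp
  qed
  show "B \<subseteq> psi \<alpha> (\<lambda>j. if j < L then q j else t (j - L))"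
  proof
    fix x assume x: "x \<in> B"
    have xq: "x \<notin> rat_ball \<alpha> (q j)" for j using x assms(2) by (auto simp: psi_def)
    have xt: "x \<notin> rat_ball \<alpha> (t j)" for j using x assms(1) by (auto simp: psi_def)
    have "x \<notin> rat_ball \<alpha> (if j < L then q j else t (j - L))" for j
      using xq xt by simp
    thus "x \<in> psi \<alpha> (\<lambda>j. if j < L then q j else t (j - L))" by (simp add: psi_def)
  qed
qed

lemma cauchy_close:
  assumes "p \<in> cauchy_names \<alpha> x" "p' \<in> cauchy_names \<alpha> x'" "p k = p' k"
  shows "dist x x' \<le> 2 * (1/2) ^ k"
proof -
  have "dist (\<alpha> (p k)) x \<le> (1/2)^k" using assms(1) by (simp add: cauchy_names_def)
  have "dist (\<alpha> (p' k)) x' \<le> (1/2)^k" using assms(2) by (simp add: cauchy_names_def)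
  hence "dist (\<alpha> (p k)) x' \<le> (1/2)^k" using assms(3) by simp
  note \<open>dist (\<alpha> (p k)) x \<le> (1/2)^k\<close> this
  moreover have "dist x x' \<le> dist (\<alpha> (p k)) x + dist (\<alpha> (p k)) x'" by (rule dist_triangle3)
  ultimately show ?thesis by linarith
qed

theorem lemma19:
  fixes \<alpha> :: "nat \<Rightarrow> 'a::{metric_space, complete_space}"
    and \<beta> :: "nat \<Rightarrow> 'b::metric_space"
    and \<AA> :: "'a set set" and \<BB> :: "'b set set"
    and K :: "(nat \<Rightarrow> nat) \<Rightarrow> (nat \<Rightarrow> nat)"
    and H :: "(nat \<Rightarrow> nat) \<times> (nat \<Rightarrow> nat) \<Rightarrow> (nat \<Rightarrow> nat)"
    and DK :: "(nat \<Rightarrow> nat) set" and DH :: "((nat \<Rightarrow> nat) \<times> (nat \<Rightarrow> nat)) set"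
  assumes dense_X: "dense_seq \<alpha>"
    and dense_Y: "dense_seq \<beta>"
    and Y_compact: "compact (UNIV :: 'b set)"
    and A_closed: "\<forall>A\<in>\<AA>. closed A"
    and B_closed: "\<forall>B\<in>\<BB>. closed B"
    and K_dom: "dom_choice \<alpha> \<AA> \<subseteq> DK"
    and K_cont: "continuous_on DK K"
    and H_dom: "{(p, q). p \<in> dom_choice \<alpha> \<AA> \<and> (\<exists>y\<in>psi \<beta> (K p). q \<in> cauchy_names \<beta> y)} \<subseteq> DH"
    and H_cont: "continuous_on DH H"
    and K_red: "\<forall>p\<in>dom_choice \<alpha> \<AA>. K p \<in> dom_choice \<beta> \<BB>"
    and H_red: "\<forall>p\<in>dom_choice \<alpha> \<AA>. \<forall>y\<in>psi \<beta> (K p). \<forall>q\<in>cauchy_names \<beta> y.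
                  \<exists>x\<in>psi \<alpha> p. H (p, q) \<in> cauchy_names \<alpha> x"
  shows "\<forall>p\<in>dom_choice \<alpha> \<AA>. \<forall>\<epsilon>>0. \<exists>n::nat. \<exists>\<delta>>0.
           \<forall>q\<in>X_eps \<alpha> \<AA> \<epsilon> \<inter> baire_ball p n \<inter> DK. diameter (psi \<beta> (K q)) > \<delta>"
proof (intro ballI allI impI)
  fix p \<epsilon> assume pdom: "p \<in> dom_choice \<alpha> \<AA>" and \<epsilon>: "(\<epsilon>::real) > 0"
  have pDK: "p \<in> DK" using pdom K_dom by blast
  have ne_psiK: "psi \<beta> (K s) \<noteq> {}" if "s \<in> dom_choice \<alpha> \<AA>" for s
    using K_red that by (simp add: dom_choice_def)
  define Good where "Good = {p. psi \<alpha> p \<in> \<AA> \<and> psi \<alpha> p \<noteq> {} \<and>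
      (\<forall>x. \<exists>B\<in>\<AA>. B \<noteq> {} \<and> B \<subseteq> psi \<alpha> p - ball x \<epsilon>)}"
  have Xe: "X_eps \<alpha> \<AA> \<epsilon> = closure Good" by (simp add: X_eps_def Good_def)
  have Good_dom: "q \<in> dom_choice \<alpha> \<AA>" if "q \<in> Good" for q
    using that by (simp add: Good_def dom_choice_def)
  have bnd: "bounded S" for S :: "'b set"
    using compact_imp_bounded[OF Y_compact] bounded_subset by blast
  show "\<exists>n::nat. \<exists>\<delta>>0. \<forall>q\<in>X_eps \<alpha> \<AA> \<epsilon> \<inter> baire_ball p n \<inter> DK. diameter (psi \<beta> (K q)) > \<delta>"
  proof (rule ccontr)
    assume neg: "\<not> ?thesis"
    have claimA: "\<exists>q'. q' \<in> Good \<and> agree q' p (Suc n) \<and>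
       (\<exists>z\<in>psi \<beta> (K q'). psi \<beta> (K q') \<subseteq> ball z (1 / real (Suc n)))" for n
    proof -
      define \<delta> where "\<delta> = 1 / (3 * real (Suc n))"
      have \<delta>: "\<delta> > 0" by (simp add: \<delta>_def)
      have "\<not> (\<forall>q\<in>X_eps \<alpha> \<AA> \<epsilon> \<inter> baire_ball p n \<inter> DK. diameter (psi \<beta> (K q)) > \<delta>)"
        using neg \<delta> by blast
      then obtain q where q: "q \<in> X_eps \<alpha> \<AA> \<epsilon>" "q \<in> baire_ball p n" "q \<in> DK"
        "diameter (psi \<beta> (K q)) \<le> \<delta>" by (auto simp: not_less)
      define D where "D = psi \<beta> (K q)"
      define U where "U = (\<Union>w\<in>D. ball w \<delta>)"
      have oU: "open U" unfolding U_def by (intro open_UN ballI open_ball)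
      have DU: "psi \<beta> (K q) \<subseteq> U"
      proof
        fix w assume "w \<in> psi \<beta> (K q)"
        hence "w \<in> D" "w \<in> ball w \<delta>" using \<delta> D_def by auto
        thus "w \<in> U" unfolding U_def by blast
      qed
      note X1 = shrink[where \<beta>=\<beta> and K=K and D=DK and q=q and U=U]
      obtain N where N: "\<forall>s\<in>DK. agree s q N \<longrightarrow> psi \<beta> (K s) \<subseteq> U"
        using X1 Y_compact K_cont q(3) oU DU by blast
      obtain q' where q': "q' \<in> Good" "agree q' q (max N (Suc n))"
        using closure_agree[of q Good] q(1) Xe by auto
      have q'DK: "q' \<in> DK" using Good_dom q'(1) K_dom by blast
      have sub: "psi \<beta> (K q') \<subseteq> U" using N q'DK agree_mono[OF q'(2)] by simp
      obtain z where z: "z \<in> psi \<beta> (K q')" using ne_psiK[OF Good_dom[OF q'(1)]] by blast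
      have "psi \<beta> (K q') \<subseteq> ball z (1 / real (Suc n))"
      proof
        fix y assume y: "y \<in> psi \<beta> (K q')"
        obtain w1 where w1: "w1 \<in> D" "dist w1 y < \<delta>" using sub y unfolding U_def by auto
        obtain w2 where w2: "w2 \<in> D" "dist w2 z < \<delta>" using sub z unfolding U_def by auto
        have "dist w2 w1 \<le> diameter D" using diameter_bounded_bound[OF bnd w2(1) w1(1)] .
        hence d12: "dist w2 w1 \<le> \<delta>" using q(4) D_def by simp
        have "dist z y \<le> dist z w2 + dist w2 y" by (rule dist_triangle)
        moreover have "dist w2 y \<le> dist w2 w1 + dist w1 y" by (rule dist_triangle)
        moreover have "dist z w2 = dist w2 z" by (rule dist_commute)
        ultimately have "dist z y < 3 * \<delta>" using w1 w2 d12 by linarith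
        moreover have "3 * \<delta> = 1 / real (Suc n)" by (simp add: \<delta>_def field_simps)
        ultimately show "y \<in> ball z (1 / real (Suc n))" by simp
      qed
      moreover have "agree q' p (Suc n)"
        using agree_trans[OF agree_mono[OF q'(2)] baire_ball_agree[OF q(2)]] by simp
      ultimately show ?thesis using q'(1) z by blast
    qed
    hence "\<forall>n. \<exists>q'. q' \<in> Good \<and> agree q' p (Suc n) \<and>
       (\<exists>z\<in>psi \<beta> (K q'). psi \<beta> (K q') \<subseteq> ball z (1 / real (Suc n)))" by blast
    then obtain Q where Q: "\<And>n. Q n \<in> Good \<and> agree (Q n) p (Suc n) \<and>
       (\<exists>z\<in>psi \<beta> (K (Q n)). psi \<beta> (K (Q n)) \<subseteq> ball z (1 / real (Suc n)))"
      by metis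
    hence "\<forall>n. \<exists>z. z \<in> psi \<beta> (K (Q n)) \<and> psi \<beta> (K (Q n)) \<subseteq> ball z (1 / real (Suc n))" by blast
    then obtain Z where Z: "\<And>n. Z n \<in> psi \<beta> (K (Q n))" "\<And>n. psi \<beta> (K (Q n)) \<subseteq> ball (Z n) (1 / real (Suc n))"
      by metis
    have QG: "\<And>n. Q n \<in> Good" and Qa: "\<And>n. agree (Q n) p (Suc n)" using Q by auto
    have QDK: "Q n \<in> DK" for n using Good_dom[OF QG] K_dom by blast
    obtain y \<sigma> where \<sigma>: "strict_mono \<sigma>" "(Z \<circ> \<sigma>) \<longlonglongrightarrow> y"
      using seq_compactE[OF compact_imp_seq_compact[OF Y_compact], of Z] by blast
    have sle: "n \<le> \<sigma> n" for n by (rule seq_suble[OF \<sigma>(1)])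
    have ypsi: "y \<in> psi \<beta> (K p)"
    proof (rule ccontr)
      assume "y \<notin> psi \<beta> (K p)"
      then obtain i where i: "y \<in> rat_ball \<beta> (K p i)" by (auto simp: psi_def)
      have ev: "eventually (\<lambda>n. (Z \<circ> \<sigma>) n \<in> rat_ball \<beta> (K p i)) sequentially"
        by (rule topological_tendstoD[OF \<sigma>(2) open_rat_ball i])
      obtain N0 where N0: "\<forall>s\<in>DK. agree s p N0 \<longrightarrow> agree (K s) (K p) (Suc i)"
        using cont_agree[OF K_cont pDK] by blast
      obtain n1 where n1: "\<And>n. n \<ge> n1 \<Longrightarrow> Z (\<sigma> n) \<in> rat_ball \<beta> (K p i)"
        using ev unfolding eventually_sequentially by auto
      define n where "n = max n1 N0"
      have zin: "Z (\<sigma> n) \<in> rat_ball \<beta> (K p i)" using n1 n_def by simp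
      have "agree (Q (\<sigma> n)) p N0"
        using agree_mono[OF Qa[of "\<sigma> n"]] sle[of n] n_def by simp
      hence "agree (K (Q (\<sigma> n))) (K p) (Suc i)" using N0 QDK by blast
      hence "K (Q (\<sigma> n)) i = K p i" by (simp add: agree_def)
      moreover have "Z (\<sigma> n) \<notin> rat_ball \<beta> (K (Q (\<sigma> n)) i)" using Z(1)[of "\<sigma> n"] by (simp add: psi_def)
      ultimately show False using zin by simp
    qed
    obtain r where r: "\<forall>i. dist (\<beta> (r i)) y < (1/2) ^ Suc i" using strict_name[OF dense_Y] by blast
    have rc: "r \<in> cauchy_names \<beta> y"
    proof -
      have "dist (\<beta> (r i)) y \<le> (1/2) ^ i" for i
      proof -
        have "(1/2::real) ^ Suc i \<le> (1/2) ^ i" by (simp add: power_decreasing)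
        thus ?thesis using r[rule_format, of i] by linarith
      qed
      thus ?thesis by (simp add: cauchy_names_def)
    qed
    have prDH: "(p, r) \<in> DH" using H_dom pdom ypsi rc by blast
    obtain x0 where x0: "H (p, r) \<in> cauchy_names \<alpha> x0" using H_red pdom ypsi rc by blast
    obtain k where k: "(1/2::real) ^ k < \<epsilon> / 2" using real_arch_pow_inv[of "\<epsilon>/2" "1/2"] \<epsilon> by auto
    obtain N where N: "\<forall>s t. (s,t)\<in>DH \<longrightarrow> agree s p N \<longrightarrow> agree t r N \<longrightarrow> agree (H (s,t)) (H (p,r)) (Suc k)"
      using cont_agree2[OF H_cont prDH] by blast
    define \<eta> where "\<eta> = (1/2::real) ^ N"
    have \<eta>: "\<eta> > 0" by (simp add: \<eta>_def)
    obtain n0 where n0: "1 / real (Suc n0) < \<eta> / 2" using nat_approx_posE[of "\<eta>/2"] \<eta> by auto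
    have ev: "eventually (\<lambda>n. (Z \<circ> \<sigma>) n \<in> ball y (\<eta>/2)) sequentially"
      by (rule topological_tendstoD[OF \<sigma>(2) open_ball]) (simp add: \<eta>)
    obtain n1 where n1: "\<And>n. n \<ge> n1 \<Longrightarrow> Z (\<sigma> n) \<in> ball y (\<eta>/2)"
      using ev unfolding eventually_sequentially by auto
    define m where "m = \<sigma> (max n1 (max n0 N))"
    have mge: "m \<ge> n0" "m \<ge> N" using sle[of "max n1 (max n0 N)"] m_def by auto
    have zm: "dist y (Z m) < \<eta>/2" using n1[of "max n1 (max n0 N)"] m_def by simp
    have "1 / real (Suc m) \<le> 1 / real (Suc n0)" using mge(1) by (simp add: frac_le)
    hence rm: "1 / real (Suc m) < \<eta>/2" using n0 by linarith
    have ballsub: "ball (Z m) (1 / real (Suc m)) \<subseteq> ball y \<eta>"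
    proof
      fix w assume "w \<in> ball (Z m) (1 / real (Suc m))"
      hence "dist (Z m) w < 1 / real (Suc m)" by simp
      moreover have "dist y w \<le> dist y (Z m) + dist (Z m) w" by (rule dist_triangle)
      ultimately have "dist y w < \<eta>" using zm rm by linarith
      thus "w \<in> ball y \<eta>" by simp
    qed
    define q' where "q' = Q m"
    have q'psi: "psi \<beta> (K q') \<subseteq> ball y \<eta>" using Z(2)[of m] ballsub q'_def by blast
    have q'G: "q' \<in> Good" using QG q'_def by simp
    have q'a: "agree q' p (Suc m)" using Qa q'_def by simp
    obtain B where B: "B \<in> \<AA>" "B \<noteq> {}" "B \<subseteq> psi \<alpha> q' - ball x0 \<epsilon>"
      using q'G unfolding Good_def by blast
    have q'DK: "q' \<in> DK" using QDK q'_def by simp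
    have obl: "open (ball y \<eta>)" by (rule open_ball)
    note X2 = shrink[where \<beta>=\<beta> and K=K and D=DK and q=q' and U="ball y \<eta>"]
    have exN2: "\<exists>N2. \<forall>s\<in>DK. agree s q' N2 \<longrightarrow> psi \<beta> (K s) \<subseteq> ball y \<eta>"
      using X2 Y_compact K_cont q'DK obl q'psi by blast
    then obtain N2 where N2: "\<forall>s\<in>DK. agree s q' N2 \<longrightarrow> psi \<beta> (K s) \<subseteq> ball y \<eta>" by (rule exE)
    have Bcl: "closed B" using A_closed B(1) by blast
    have "x0 \<notin> B" using B(3) \<epsilon> by auto
    hence BU: "B \<noteq> UNIV" by blast
    obtain t where t: "psi \<alpha> t = B" using name_exists[OF dense_X Bcl BU] by blast
    define L where "L = max N N2"
    define s where "s = (\<lambda>j. if j < L then q' j else t (j - L))"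
    have spsi: "psi \<alpha> s = B" unfolding s_def using splice_psi[OF t] B(3) by blast
    have sdom: "s \<in> dom_choice \<alpha> \<AA>" using spsi B by (simp add: dom_choice_def)
    have sDK: "s \<in> DK" using sdom K_dom by blast
    have sq': "agree s q' L" by (simp add: agree_def s_def)
    have "psi \<beta> (K s) \<subseteq> ball y \<eta>" using N2 sDK agree_mono[OF sq'] L_def by simp
    moreover obtain y' where y': "y' \<in> psi \<beta> (K s)" using ne_psiK[OF sdom] by blast
    ultimately have "y' \<in> ball y \<eta>" by blast
    hence yy': "dist y y' < \<eta>" by simp
    have "\<forall>i<N. dist (\<beta> (r i)) y' \<le> (1/2) ^ i"
    proof (intro allI impI)
      fix i assume i: "i < N"
      have "\<eta> \<le> (1/2::real) ^ Suc i" unfolding \<eta>_def using i by (intro power_decreasing) auto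
      moreover have "dist (\<beta> (r i)) y' \<le> dist (\<beta> (r i)) y + dist y y'" by (rule dist_triangle)
      moreover have "(1/2::real) ^ Suc i + (1/2) ^ Suc i = (1/2) ^ i" by simp
      ultimately show "dist (\<beta> (r i)) y' \<le> (1/2) ^ i" using r[rule_format, of i] yy' by linarith
    qed
    then obtain r' where r': "agree r' r N" "r' \<in> cauchy_names \<beta> y'"
      using name_patch[OF dense_Y] by blast
    have srDH: "(s, r') \<in> DH" using H_dom sdom y' r'(2) by blast
    obtain x where x: "x \<in> psi \<alpha> s" "H (s, r') \<in> cauchy_names \<alpha> x" using H_red sdom y' r'(2) by blast
    have "agree s p N"
    proof -
      have "agree s q' N" using agree_mono[OF sq'] L_def by simp
      moreover have "agree q' p N" using agree_mono[OF q'a] mge(2) by simp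
      ultimately show ?thesis by (rule agree_trans)
    qed
    hence "agree (H (s, r')) (H (p, r)) (Suc k)" using N srDH r'(1) by blast
    hence "H (p, r) k = H (s, r') k" by (simp add: agree_def)
    hence "dist x0 x \<le> 2 * (1/2) ^ k" by (rule cauchy_close[OF x0 x(2)])
    hence "dist x0 x < \<epsilon>" using k by linarith
    moreover have "x \<in> B" using x(1) spsi by simp
    ultimately show False using B(3) by auto
  qed
qed

end
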